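(* Let $n\ge 3$ and consider the cycle graph on nodes $1,\dots,n$ with measurements $\widetilde{R}_{12},\dots,\widetilde{R}_{n-1,n},\widetilde{R}_{n1}\in\mathrm{SO}(3)$ that all lie in a common one-parameter subgroup of $\mathrm{SO}(3)$ (all are rotations about a common axis). Then the point $R^\ast=(R_1^\ast,\dots,R_n^\ast)$ with $R_1^\ast=I_3$ and $$R_i^\ast=\Big(\prod_{s=1}^{i-1}\widetilde{R}_{s,s+1}\Big)^{\top}E_0^{\,i-1},\qquad i\in\{2,\dots,n\},$$ (product from left to right) is a global minimizer of $f$ over $\mathrm{SO}(3)^n$.
   Context: Cycle-graph rotation averaging setup. Let $n\ge 3$. The cycle graph has nodes $1,\dots,n$ and edges $\{i,i+1\}$ for $i=1,\dots,n-1$ together with $\{n,1\}$; write $i\sim j$ if $\{i,j\}$ is an edge. Each edge carries a measured rotation $\widetilde{R}_{ij}\in\mathrm{SO}(3)$, with the convention $\widetilde{R}_{ji}=\widetilde{R}_{ij}^\top$. Define the symmetric $3n\times 3n$ block matrix $\widetilde{R}$ whose $(i,j)$ $3\times3$ block is $I_3$ if $i=j$, $\widetilde{R}_{ij}$ if $i\sim j$, and $0$ otherwise. For $R=(R_1,\dots,R_n)\in\mathrm{SO}(3)^n$, write $R=[R_1^\top\ \cdots\ R_n^\top]^\top\in\mathbb{R}^{3n\times 3}$ and define $f(R):=-\operatorname{Tr}(R^\top\widetilde{R}R)$; the rotation averaging problem is to minimize $f$ over $\mathrm{SO}(3)^n$. The cycle error is $E:=\widetilde{R}_{12}\widetilde{R}_{23}\cdots\widetilde{R}_{n-1,n}\widetilde{R}_{n1}\in\mathrm{SO}(3)$.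 Write $E=\exp(\gamma[\hat n]_\times)$ with unit axis $\hat n$ and angle $\gamma=\angle(E)\in[-\pi,\pi]$. For $k\in\{0,\dots,n-1\}$, $E_k:=\exp\big((\gamma/n-2k\pi/n)[\hat n]_\times\big)$; in particular $E_0=\exp((\gamma/n)[\hat n]_\times)$. *)

theory Defs
  imports "HOL-Analysis.Analysis"
begin

type_synonym mat3 = "real^3^3"

definition SO3 :: "mat3 set" where
  "SO3 = {A. orthogonal_matrix A \<and> det A = 1}"

primrec matpow :: "mat3 \<Rightarrow> nat \<Rightarrow> mat3" where
  "matpow A 0 = mat 1"
| "matpow A (Suc k) = A ** matpow A k"

definition mat_exp :: "mat3 \<Rightarrow> mat3" where
  "mat_exp A = (\<Sum>k. (1 / fact k) *\<^sub>R matpow A k)"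

definition skew :: "real^3 \<Rightarrow> mat3" where
  "skew u = vector [vector [0, - u$3, u$2],
                    vector [u$3, 0, - u$1],
                    vector [- u$2, u$1, 0]]"

text \<open>Measurements: meas i = R~_{i,i+1} for 1 <= i <= n-1, and meas n = R~_{n,1}.\<close>

definition cyc_adj :: "nat \<Rightarrow> nat \<Rightarrow> nat \<Rightarrow> bool" where
  "cyc_adj n i j \<longleftrightarrow> i \<in> {1..n} \<and> j \<in> {1..n} \<and>
     (j = i + 1 \<or> i = j + 1 \<or> (i = n \<and> j = 1) \<or> (i = 1 \<and> j = n))"

definition edge_meas :: "nat \<Rightarrow> (nat \<Rightarrow> mat3) \<Rightarrow> nat \<Rightarrow> nat \<Rightarrow> mat3" where
  "edge_meas n meas i j =
     (if i < n \<and> j = i + 1 then meas i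
      else if j < n \<and> i = j + 1 then transpose (meas j)
      else if i = n \<and> j = 1 then meas n
      else if i = 1 \<and> j = n then transpose (meas n)
      else 0)"

text \<open>The (i,j) 3x3 block of the 3n x 3n matrix R~.\<close>
definition Rtil_block :: "nat \<Rightarrow> (nat \<Rightarrow> mat3) \<Rightarrow> nat \<Rightarrow> nat \<Rightarrow> mat3" where
  "Rtil_block n meas i j =
     (if i = j then mat 1 else if cyc_adj n i j then edge_meas n meas i j else 0)"

text \<open>f(R) = - Tr(R^T R~ R), written blockwise.\<close>
definition cost :: "nat \<Rightarrow> (nat \<Rightarrow> mat3) \<Rightarrow> (nat \<Rightarrow> mat3) \<Rightarrow> real" where
  "cost n meas R =
     - (\<Sum>i\<in>{1..n}. \<Sum>j\<in>{1..n}. trace (transpose (R i) ** Rtil_block n meas i j ** R j))"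

definition lprod :: "(nat \<Rightarrow> mat3) \<Rightarrow> nat \<Rightarrow> mat3" where
  "lprod meas k = foldl (\<lambda>A s. A ** meas s) (mat 1) [1..<k]"

definition cycle_err :: "nat \<Rightarrow> (nat \<Rightarrow> mat3) \<Rightarrow> mat3" where
  "cycle_err n meas = lprod meas (n + 1)"

end

theory Submission
  imports Defs
begin



lemma mm_add_l: "(A + B) ** (C::real^3^3) = A ** C + B ** C"
  by (vector matrix_matrix_mult_def sum.distrib[symmetric] field_simps)
lemma mm_add_r: "(C::real^3^3) ** (A + B) = C ** A + C ** B"
  by (rule matrix_add_ldistrib)
lemma mm_diff_l: "(A - B) ** (C::real^3^3) = A ** C - B ** C"
  by (vector matrix_matrix_mult_def sum_subtractf[symmetric] field_simps)
lemma mm_diff_r: "(C::real^3^3) ** (A - B) = C ** A - C ** B"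
  by (vector matrix_matrix_mult_def sum_subtractf[symmetric] field_simps)
lemma mm_neg_l: "(- A) ** (C::real^3^3) = - (A ** C)"
  by (vector matrix_matrix_mult_def sum_negf[symmetric])
lemma mm_neg_r: "(C::real^3^3) ** (- A) = - (C ** A)"
  by (vector matrix_matrix_mult_def sum_negf[symmetric])
lemma mm_scale_l: "(k *\<^sub>R A) ** (C::real^3^3) = k *\<^sub>R (A ** C)"
  by (simp add: scalar_matrix_assoc)
lemma mm_scale_r: "(C::real^3^3) ** (k *\<^sub>R A) = k *\<^sub>R (C ** A)"
  by (simp add: matrix_matrix_mult_def sum_distrib_left mult_ac vec_eq_iff)
lemma mv_neg: "(- A) *v (x::real^3) = - (A *v x)"
  by (vector matrix_vector_mult_def sum_negf[symmetric])

lemmas mm_simps = mm_add_l mm_add_r mm_diff_l mm_diff_r mm_neg_l mm_neg_r mm_scale_l mm_scale_r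

lemma skew_mulv: "skew u *v x = cross3 u x"
  by (simp add: skew_def cross3_def matrix_vector_mult_def sum_3 vec_eq_iff forall_3 algebra_simps)

lemma skew_cube: assumes "norm u = 1"
  shows "skew u ** (skew u ** skew u) = - skew u"
proof -
  have uu: "u \<bullet> u = 1" using assms by (simp add: dot_square_norm)
  show ?thesis
  proof (subst matrix_eq, intro allI)
    fix x
    show "(skew u ** (skew u ** skew u)) *v x = (- skew u) *v x"
      by (simp add: matrix_vector_mul_assoc[symmetric] skew_mulv Lagrange uu mv_neg
          cross_mult_right Cross3.right_diff_distrib dot_cross_self matrix_vector_mult_diff_rdistrib)
  qed
qed

definition rod :: "real \<Rightarrow> real^3 \<Rightarrow> real^3^3" where
  "rod a u = mat 1 + sin a *\<^sub>R skew u + (1 - cos a) *\<^sub>R (skew u ** skew u)"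

lemma comb_mult:
  fixes K :: "real^3^3"
  assumes K3: "K ** (K ** K) = - K"
  shows "(mat 1 + s1 *\<^sub>R K + t1 *\<^sub>R (K ** K)) ** (mat 1 + s2 *\<^sub>R K + t2 *\<^sub>R (K ** K))
   = mat 1 + (s1 + s2 - s1 * t2 - t1 * s2) *\<^sub>R K + (t1 + t2 + s1 * s2 - t1 * t2) *\<^sub>R (K ** K)"
proof -
  have K3': "(K ** K) ** K = - K" using K3 by (simp add: matrix_mul_assoc)
  have K4: "(K ** K) ** (K ** K) = - (K ** K)"
    by (metis K3 matrix_mul_assoc mm_neg_r)
  show ?thesis
    by (simp add: mm_simps K3 K3' K4 algebra_simps)
qed

lemma rod_mult: assumes "norm u = 1" shows "rod a u ** rod b u = rod (a + b) u"
  unfolding rod_def comb_mult[OF skew_cube[OF assms]]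
  by (simp add: sin_add cos_add algebra_simps)

lemma matpow_scale: "matpow (t *\<^sub>R A) k = t ^ k *\<^sub>R matpow A k"
  by (induction k) (simp_all add: mm_scale_l mm_scale_r)

lemma matpow_skew:
  assumes "norm u = 1"
  shows "matpow (skew u) k = (if k = 0 then mat 1 else
     (fact k * sin_coeff k) *\<^sub>R skew u - (fact k * cos_coeff k) *\<^sub>R (skew u ** skew u))"
proof (induction k)
  case 0
  then show ?case by simp
next
  case (Suc k)
  show ?case
  proof (cases "k = 0")
    case True
    then show ?thesis by (simp add: sin_coeff_def cos_coeff_def)
  next
    case False
    have s: "fact (Suc k) * sin_coeff (Suc k) = fact k * cos_coeff k"
      by (simp add: sin_coeff_Suc field_simps)
    have c: "fact (Suc k) * cos_coeff (Suc k) = - (fact k * sin_coeff k)"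
      by (simp add: cos_coeff_Suc field_simps)
    show ?thesis using False Suc.IH
      by (simp only: matpow.simps s c) (simp add: mm_simps skew_cube[OF assms] algebra_simps)
  qed
qed

lemma mat_exp_skew:
  assumes "norm u = 1"
  shows "mat_exp (t *\<^sub>R skew u) = rod t u"
proof -
  let ?K = "skew u"
  have trm: "(1 / fact k) *\<^sub>R matpow (t *\<^sub>R ?K) k =
     (if k = 0 then 1 else 0) *\<^sub>R mat 1 + (sin_coeff k * t ^ k) *\<^sub>R ?K
     + ((if k = 0 then 1 else 0) - cos_coeff k * t ^ k) *\<^sub>R (?K ** ?K)" for k
    by (simp add: matpow_scale matpow_skew[OF assms] sin_coeff_def cos_coeff_def algebra_simps)
  have s1: "(\<lambda>k. (if k = 0 then 1 else 0::real)) sums 1"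
    using sums_single[of 0 "\<lambda>_. 1::real"] by simp
  have s2: "(\<lambda>k. sin_coeff k * t ^ k) sums sin t" using sin_converges[of t] by simp
  have s3: "(\<lambda>k. (if k = 0 then 1 else 0) - cos_coeff k * t ^ k) sums (1 - cos t)"
    using sums_diff[OF s1 cos_converges[of t]] by simp
  have "(\<lambda>k. (1 / fact k) *\<^sub>R matpow (t *\<^sub>R ?K) k) sums rod t u"
    unfolding trm rod_def
    using sums_add[OF sums_add[OF sums_scaleR_left[OF s1, of "mat 1::real^3^3"]
        sums_scaleR_left[OF s2, of ?K]] sums_scaleR_left[OF s3, of "?K ** ?K"]] by simp
  then show ?thesis unfolding mat_exp_def by (simp add: sums_unique[symmetric])
qed

lemma tr_add: "transpose (A + B) = transpose A + transpose (B::real^3^3)"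
  by (simp add: transpose_def vec_eq_iff)
lemma tr_diff: "transpose (A - B) = transpose A - transpose (B::real^3^3)"
  by (simp add: transpose_def vec_eq_iff)
lemma tr_neg: "transpose (- A) = - transpose (A::real^3^3)"
  by (simp add: transpose_def vec_eq_iff)
lemma skew_transpose: "transpose (skew u) = - skew u"
  by (simp add: skew_def transpose_def vec_eq_iff forall_3)

lemma rod_transpose: "transpose (rod a u) = rod (- a) u"
  by (simp add: rod_def tr_add transpose_scalar matrix_transpose_mul skew_transpose mm_neg_l mm_neg_r)

lemma rod_0: "rod 0 u = mat 1" by (simp add: rod_def)

lemma orth_rod: assumes "norm u = 1" shows "orthogonal_matrix (rod a u)"
  unfolding orthogonal_matrix_def rod_transpose rod_mult[OF assms] by (simp add: rod_0)

lemma det_rod: assumes "norm u = 1" shows "det (rod a u) = 1"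
proof -
  have "rod a u = rod (a/2) u ** rod (a/2) u" by (simp add: rod_mult[OF assms])
  then have "det (rod a u) = (det (rod (a/2) u))^2" by (metis det_mul power2_eq_square)
  then have "det (rod a u) \<ge> 0" by simp
  then show ?thesis using det_orthogonal_matrix[OF orth_rod[OF assms, of a]] by auto
qed

lemma rod_SO3: "norm u = 1 \<Longrightarrow> rod a u \<in> SO3"
  by (simp add: SO3_def orth_rod det_rod)

lemma SO3_mult: "A \<in> SO3 \<Longrightarrow> B \<in> SO3 \<Longrightarrow> A ** B \<in> SO3"
  by (simp add: SO3_def orthogonal_matrix_mul det_mul)
lemma SO3_transpose: "A \<in> SO3 \<Longrightarrow> transpose A \<in> SO3"
  by (simp add: SO3_def)
lemma SO3_id: "mat 1 \<in> SO3"
  by (simp add: SO3_def orthogonal_matrix_id)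
lemma SO3_tl: "A \<in> SO3 \<Longrightarrow> transpose A ** A = mat 1"
  by (simp add: SO3_def orthogonal_matrix_def)
lemma SO3_tr: "A \<in> SO3 \<Longrightarrow> A ** transpose A = mat 1"
  by (simp add: SO3_def orthogonal_matrix_def)

lemma trace_scale: "trace (k *\<^sub>R (A::real^3^3)) = k * trace A"
  by (simp add: trace_def sum_distrib_left)
lemma trace_neg: "trace (- (A::real^3^3)) = - trace A"
  by (simp add: trace_def sum_negf)
lemma trace_transp: "trace (transpose (A::real^3^3)) = trace A"
  by (simp add: trace_def transpose_def)
lemma trace_id3: "trace (mat 1 :: real^3^3) = 3"
  by (simp add: trace_I)

lemma T1: "trace (skew u) = 0"
  by (simp add: trace_def sum_3 skew_def)
lemma T2: "trace (skew u ** skew v) = - 2 * (u \<bullet> v)"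
  by (simp add: trace_def sum_3 skew_def matrix_matrix_mult_def inner_vec_def)
lemma T3: "trace (skew u ** (skew v ** skew v)) = 0"
  by (simp add: trace_def sum_3 skew_def matrix_matrix_mult_def inner_vec_def)
lemma T3': "trace ((skew u ** skew u) ** skew v) = 0"
  by (simp add: trace_def sum_3 skew_def matrix_matrix_mult_def inner_vec_def)
lemma T4: "trace ((skew u ** skew u) ** (skew v ** skew v)) = (u \<bullet> v)^2 + (u \<bullet> u) * (v \<bullet> v)"
  by (simp add: trace_def sum_3 skew_def matrix_matrix_mult_def inner_vec_def) algebra

lemma trace_rod: assumes "norm u = 1" shows "trace (rod a u) = 1 + 2 * cos a"
proof -
  have "u \<bullet> u = 1" using assms by (simp add: dot_square_norm)
  then show ?thesis
    unfolding rod_def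
    by (simp only: trace_add trace_scale T1 T2 trace_id3) (simp add: algebra_simps)
qed

lemma trace_rod_rod:
  assumes "norm u = 1" "norm v = 1"
  shows "trace (rod a u ** rod b v) = 3 - 2 * (1 - cos a) - 2 * (1 - cos b)
     - 2 * sin a * sin b * (u \<bullet> v) + (1 - cos a) * (1 - cos b) * ((u \<bullet> v)^2 + 1)"
proof -
  have uu: "u \<bullet> u = 1" using assms by (simp add: dot_square_norm)
  have vv: "v \<bullet> v = 1" using assms by (simp add: dot_square_norm)
  have T3'': "trace (skew u ** skew u ** skew v) = 0" using T3' by simp
  have T4': "trace (skew u ** skew u ** (skew v ** skew v)) = (u \<bullet> v)^2 + 1"
    using T4[of u v] uu vv by simp
  show ?thesis
    unfolding rod_def
    apply (simp only: mm_simps matrix_mul_lid matrix_mul_rid trace_add trace_scale T1 T2 T3 T3'' T4' trace_id3)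
    apply (simp add: uu vv algebra_simps)
    done
qed

lemma det_neg3: "det (- (M::real^3^3)) = - det M"
  by (simp add: det_3 algebra_simps)

lemma SO3_fixed: assumes "A \<in> SO3" shows "\<exists>u. norm u = 1 \<and> A *v u = u"
proof -
  have oA: "orthogonal_matrix A" and dA: "det A = 1" using assms by (auto simp: SO3_def)
  have "A ** (mat 1 - transpose A) = A - mat 1"
    using oA by (simp add: mm_simps orthogonal_matrix_def)
  then have "det (A - mat 1) = det (mat 1 - transpose A)"
    by (metis dA det_mul mult_1)
  also have "mat 1 - transpose A = transpose (mat 1 - A)" by (simp add: tr_diff)
  also have "det \<dots> = det (- (A - mat 1))" by simp
  finally have e1: "det (A - mat 1) = det (- (A - mat 1))" .
  have d0: "det (A - mat 1) = 0" using e1 det_neg3[of "A - mat 1"] by linarith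
  have "\<exists>x. (A - mat 1) *v x = 0 \<and> x \<noteq> 0"
  proof (rule ccontr)
    assume "\<not> ?thesis"
    then have "\<forall>x. (A - mat 1) *v x = 0 \<longrightarrow> x = 0" by blast
    then obtain B where "B ** (A - mat 1) = mat 1"
      using matrix_left_invertible_ker by blast
    then have "det B * det (A - mat 1) = 1" by (metis det_I det_mul)
    then show False using d0 by simp
  qed
  then obtain x where x: "(A - mat 1) *v x = 0" "x \<noteq> 0" by blast
  have Ax: "A *v x = x" using x(1) by (simp add: matrix_vector_mult_diff_rdistrib)
  define u where "u = (1 / norm x) *\<^sub>R x"
  have "norm u = 1" using x(2) by (simp add: u_def)
  moreover have "A *v u = u" by (simp add: u_def matrix_vector_mult_scaleR Ax)
  ultimately show ?thesis by blast
qed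

lemma orth_inner: assumes "A \<in> SO3" shows "(A *v x) \<bullet> (A *v y) = x \<bullet> y"
proof -
  have "(A *v x) \<bullet> (A *v y) = ((A *v x) v* A) \<bullet> y" by (simp add: dot_lmul_matrix)
  also have "(A *v x) v* A = (transpose A ** A) *v x"
    by (simp add: matrix_vector_mul_assoc[symmetric])
  finally show ?thesis using SO3_tl[OF assms] by simp
qed

lemma mv_scale: "(k *\<^sub>R A) *v (x::real^3) = k *\<^sub>R (A *v x)"
  by (simp add: vec_eq_iff matrix_vector_mult_def sum_distrib_left algebra_simps)

lemma rod_mulv: "rod a u *v x = x + sin a *\<^sub>R cross3 u x + (1 - cos a) *\<^sub>R cross3 u (cross3 u x)"
  by (simp add: rod_def matrix_vector_mult_add_rdistrib mv_scale
      matrix_vector_mul_assoc[symmetric] skew_mulv)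

lemma SO3_rod: assumes "A \<in> SO3" shows "\<exists>a u. norm u = 1 \<and> A = rod a u"
proof -
  obtain u where u1: "norm u = 1" and Au: "A *v u = u" using SO3_fixed[OF assms] by blast
  have uu: "u \<bullet> u = 1" using u1 by (simp add: dot_square_norm)
  have "u \<noteq> 0" using u1 by auto
  then obtain e where e: "cross3 u e \<noteq> 0" using cross_basis_nonzero by blast
  define v where "v = (1 / norm (cross3 u e)) *\<^sub>R cross3 u e"
  have v1: "norm v = 1" using e by (simp add: v_def)
  have vv: "v \<bullet> v = 1" using v1 by (simp add: dot_square_norm)
  have uv: "u \<bullet> v = 0" by (simp add: v_def dot_cross_self)
  define w where "w = cross3 u v"
  have uw: "u \<bullet> w = 0" and vw: "v \<bullet> w = 0" by (simp_all add: w_def dot_cross_self inner_commute)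
  have "(norm w)^2 = 1" using norm_cross_dot[of u v] u1 v1 uv by (simp add: w_def)
  then have ww: "w \<bullet> w = 1" by (simp add: dot_square_norm)
  have uxw: "cross3 u w = - v" by (simp add: w_def Lagrange uv uu)
  have expand: "x = (u \<bullet> x) *\<^sub>R u + (v \<bullet> x) *\<^sub>R v + (w \<bullet> x) *\<^sub>R w" for x
  proof -
    define y where "y = x - ((u \<bullet> x) *\<^sub>R u + (v \<bullet> x) *\<^sub>R v + (w \<bullet> x) *\<^sub>R w)"
    have yu: "u \<bullet> y = 0" by (simp add: y_def inner_diff_right inner_add_right uu uv uw)
    have vu: "v \<bullet> u = 0" and wu: "w \<bullet> u = 0" and wv: "w \<bullet> v = 0"
      using uv uw vw by (simp_all add: inner_commute)
    have yv: "v \<bullet> y = 0" by (simp add: y_def inner_diff_right inner_add_right vv vu vw)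
    have yw: "w \<bullet> y = 0" by (simp add: y_def inner_diff_right inner_add_right ww wu wv)
    have yu': "y \<bullet> u = 0" and yv': "y \<bullet> v = 0" using yu yv by (simp_all add: inner_commute)
    have "cross3 y w = 0" unfolding w_def by (simp add: Lagrange yu' yv')
    then have "cross3 w y = 0" by (metis cross_skew neg_0_equal_iff_equal)
    moreover have "w \<noteq> 0" using ww by auto
    ultimately have "(norm y)^2 = 0" using norm_cross_dot[of w y] yw ww
      by (simp add: dot_square_norm[symmetric])
    then have "y = 0" by simp
    then show ?thesis by (simp add: y_def)
  qed
  have Avu: "u \<bullet> (A *v v) = 0" using orth_inner[OF assms, of u v] Au uv by simp
  define c where "c = v \<bullet> (A *v v)"
  define s where "s = w \<bullet> (A *v v)"
  have Av: "A *v v = c *\<^sub>R v + s *\<^sub>R w"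
    using expand[of "A *v v"] Avu by (simp add: c_def s_def)
  have "(A *v v) \<bullet> (A *v v) = 1" using orth_inner[OF assms, of v v] vv by simp
  then have cs: "c^2 + s^2 = 1"
    unfolding Av by (simp add: inner_add_left inner_add_right vv ww vw inner_commute power2_eq_square)
  have rot: "rotation_matrix A" using assms by (simp add: SO3_def rotation_matrix_def)
  have Aw: "A *v w = c *\<^sub>R w - s *\<^sub>R v"
    unfolding w_def
    by (simp add: cross_rotation_matrix[OF rot, symmetric] Au Av cross_add_right cross_mult_right
        uxw[unfolded w_def] uxw)
  obtain a where ca: "c = cos a" and sa: "s = sin a" using sincos_total_2pi[OF cs] by metis
  have Ru: "rod a u *v u = u" by (simp add: rod_mulv)
  have Rv: "rod a u *v v = c *\<^sub>R v + s *\<^sub>R w"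
    by (simp add: rod_mulv ca sa w_def[symmetric] uxw algebra_simps)
  have Rw: "rod a u *v w = c *\<^sub>R w - s *\<^sub>R v"
  proof -
    have "cross3 u (cross3 u w) = - w" by (simp only: uxw cross_minus_right) (simp add: w_def)
    then show ?thesis by (simp add: rod_mulv ca sa uxw algebra_simps)
  qed
  have "A = rod a u"
  proof (subst matrix_eq, intro allI)
    fix x
    have "A *v x = A *v ((u \<bullet> x) *\<^sub>R u + (v \<bullet> x) *\<^sub>R v + (w \<bullet> x) *\<^sub>R w)"
      using expand[of x] by simp
    also have "\<dots> = rod a u *v ((u \<bullet> x) *\<^sub>R u + (v \<bullet> x) *\<^sub>R v + (w \<bullet> x) *\<^sub>R w)"
      by (simp only: matrix_vector_right_distrib matrix_vector_mult_scaleR Au Av Aw Ru Rv Rw)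
    also have "\<dots> = rod a u *v x" using expand[of x] by simp
    finally show "A *v x = rod a u *v x" .
  qed
  then show ?thesis using u1 by blast
qed




definition hang :: "real^3^3 \<Rightarrow> real" where
  "hang Q = arccos (sqrt ((1 + trace Q) / 4))"

lemma hang_rod_sqrt: assumes "norm u = 1"
  shows "sqrt ((1 + trace (rod (2*x) u)) / 4) = \<bar>cos x\<bar>"
proof -
  have "(1 + trace (rod (2*x) u)) / 4 = (cos x)^2"
    by (simp add: trace_rod[OF assms] cos_double_cos)
  then show ?thesis by simp
qed

lemma trace_prod_half:
  assumes "norm u = 1" "norm v = 1"
  shows "1 + trace (rod (2*x) u ** rod (2*y) v)
     = 4 * (cos x * cos y - sin x * sin y * (u \<bullet> v))^2"
proof -
  have cx: "(cos x)^2 = 1 - (sin x)^2" and cy: "(cos y)^2 = 1 - (sin y)^2"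
    by (simp_all add: cos_squared_eq)
  show ?thesis
    unfolding trace_rod_rod[OF assms] sin_double cos_double_sin
    using cx cy by algebra
qed

lemma hang_rod: assumes "norm u = 1" shows "hang (rod (2*x) u) = arccos \<bar>cos x\<bar>"
  by (simp add: hang_def hang_rod_sqrt[OF assms])

lemma hang_mult: assumes "A \<in> SO3" "B \<in> SO3"
  shows "hang (A ** B) \<le> hang A + hang B"
proof -
  obtain a u where u: "norm u = 1" "A = rod a u" using SO3_rod[OF assms(1)] by blast
  obtain b v where v: "norm v = 1" "B = rod b v" using SO3_rod[OF assms(2)] by blast
  define x where "x = a/2"
  define y where "y = b/2"
  have A: "A = rod (2*x) u" and B: "B = rod (2*y) v" using u v by (simp_all add: x_def y_def)
  define d where "d = u \<bullet> v"
  have d: "\<bar>d\<bar> \<le> 1" using Cauchy_Schwarz_ineq2[of u v] u v by (simp add: d_def)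
  define p where "p = arccos \<bar>cos x\<bar>"
  define q where "q = arccos \<bar>cos y\<bar>"
  have p: "0 \<le> p" "p \<le> pi/2" unfolding p_def
    using arccos_le_pi2[of "\<bar>cos x\<bar>"] arccos_lbound[of "\<bar>cos x\<bar>"] by auto
  have q: "0 \<le> q" "q \<le> pi/2" unfolding q_def
    using arccos_le_pi2[of "\<bar>cos y\<bar>"] arccos_lbound[of "\<bar>cos y\<bar>"] by auto
  have cp: "cos p = \<bar>cos x\<bar>" and sp: "sin p = \<bar>sin x\<bar>"
    unfolding p_def by (simp_all add: sin_arccos_abs sin_squared_eq[symmetric])
  have cq: "cos q = \<bar>cos y\<bar>" and sq: "sin q = \<bar>sin y\<bar>"
    unfolding q_def by (simp_all add: sin_arccos_abs sin_squared_eq[symmetric])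
  define t where "t = cos x * cos y - sin x * sin y * d"
  have hAB: "hang (A ** B) = arccos \<bar>t\<bar>"
    unfolding hang_def A B trace_prod_half[OF u(1) v(1)] by (simp add: t_def d_def)
  have "\<bar>sin x * sin y * d\<bar> \<le> \<bar>sin x\<bar> * \<bar>sin y\<bar>"
    using d by (simp add: abs_mult mult_left_le)
  note dd = this
  have e1: "cos (p + q) = \<bar>cos x\<bar> * \<bar>cos y\<bar> - \<bar>sin x\<bar> * \<bar>sin y\<bar>"
    by (simp add: cos_add cp cq sp sq)
  have e2: "cos (p - q) = \<bar>cos x\<bar> * \<bar>cos y\<bar> + \<bar>sin x\<bar> * \<bar>sin y\<bar>"
    by (simp add: cos_diff cp cq sp sq)
  have "\<bar>cos x * cos y\<bar> - \<bar>sin x * sin y * d\<bar> \<le> \<bar>t\<bar>"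
    unfolding t_def by (rule abs_triangle_ineq2)
  then have lo: "cos (p + q) \<le> \<bar>t\<bar>" using dd unfolding e1 abs_mult by linarith
  have "\<bar>t\<bar> \<le> \<bar>cos x * cos y\<bar> + \<bar>sin x * sin y * d\<bar>"
    unfolding t_def by (rule abs_triangle_ineq4)
  then have "\<bar>t\<bar> \<le> cos (p - q)" using dd unfolding e2 abs_mult by linarith
  then have hi: "\<bar>t\<bar> \<le> 1" using cos_le_one[of "p - q"] by linarith
  have "arccos \<bar>t\<bar> \<le> arccos (cos (p + q))"
    by (rule arccos_le_arccos) (use lo hi in auto)
  also have "\<dots> = p + q" using p q by (intro arccos_cos) auto
  finally show ?thesis
    using hAB by (simp add: A B hang_rod[OF u(1)] hang_rod[OF v(1)] p_def q_def)
qed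




lemma concave_cos: "concave_on {0..pi/2} cos"
proof (rule f''_le0_imp_concave[where f' = "\<lambda>x. - sin x" and f'' = "\<lambda>x. - cos x"])
  show "convex {0..pi/2::real}" by simp
  show "\<And>x. x \<in> {0..pi/2} \<Longrightarrow> (cos has_real_derivative - sin x) (at x)"
    by (rule DERIV_cos)
  show "\<And>x. x \<in> {0..pi/2} \<Longrightarrow> ((\<lambda>x. - sin x) has_real_derivative - cos x) (at x)"
    by (auto intro!: derivative_eq_intros)
  show "\<And>x. x \<in> {0..pi/2} \<Longrightarrow> - cos x \<le> 0"
    by (auto intro!: cos_ge_zero)
qed

lemma jensen_cos:
  fixes \<psi> :: "nat \<Rightarrow> real"
  assumes "finite I" "I \<noteq> {}" "\<And>i. i \<in> I \<Longrightarrow> 0 \<le> \<psi> i \<and> \<psi> i \<le> pi/2"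
  shows "(\<Sum>i\<in>I. cos (\<psi> i)) \<le> card I * cos ((\<Sum>i\<in>I. \<psi> i) / card I)"
proof -
  have c: "card I > 0" using assms by (simp add: card_gt_0_iff)
  have "(\<Sum>i\<in>I. (1 / card I) * cos (\<psi> i)) \<le> cos (\<Sum>i\<in>I. (1 / card I) *\<^sub>R \<psi> i)"
    by (rule concave_on_sum[OF assms(1,2) concave_cos]) (use c assms(3) in auto)
  then have "(1 / card I) * (\<Sum>i\<in>I. cos (\<psi> i)) \<le> cos ((\<Sum>i\<in>I. \<psi> i) / card I)"
    by (simp add: sum_distrib_left[symmetric] sum_divide_distrib[symmetric])
  then show ?thesis using c by (simp add: field_simps)
qed

lemma pair_le_sum:
  fixes \<psi> :: "nat \<Rightarrow> real"
  assumes "finite I" "i \<in> I" "k \<in> I" "i \<noteq> k" "\<And>i. i \<in> I \<Longrightarrow> 0 \<le> \<psi> i"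
  shows "\<psi> i + \<psi> k \<le> (\<Sum>i\<in>I. \<psi> i)"
proof -
  have "sum \<psi> {i, k} \<le> sum \<psi> I" by (rule sum_mono2) (use assms in auto)
  then show ?thesis using assms(4) by simp
qed

lemma smooth_cos:
  fixes \<psi> :: "nat \<Rightarrow> real"
  assumes I: "finite I" "card I \<ge> 2" and nn: "\<And>i. i \<in> I \<Longrightarrow> 0 \<le> \<psi> i"
    and S: "(\<Sum>i\<in>I. \<psi> i) \<le> pi"
  shows "(\<Sum>i\<in>I. cos (\<psi> i)) \<le> card I * cos ((\<Sum>i\<in>I. \<psi> i) / card I)"
proof (cases "\<forall>i\<in>I. \<psi> i \<le> pi/2")
  case True
  have "I \<noteq> {}" using I by auto
  then show ?thesis using jensen_cos[OF I(1)] True nn by auto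
next
  case False
  then obtain k where k: "k \<in> I" "\<psi> k > pi/2" by auto
  have "card (I - {k}) \<ge> 1" using I k by (simp add: card_Diff_singleton)
  then have "I - {k} \<noteq> {}" by (metis card.empty not_one_le_zero)
  then obtain j where j: "j \<in> I" "j \<noteq> k" by blast
  define m where "m = (\<psi> k + \<psi> j) / 2"
  define \<psi>' where "\<psi>' = (\<lambda>i. \<psi> i + (if i = k then m - \<psi> k else 0) + (if i = j then m - \<psi> j else 0))"
  have jk: "\<psi> j + \<psi> k \<le> (\<Sum>i\<in>I. \<psi> i)" by (rule pair_le_sum) (use I j k nn in auto)
  have sum': "(\<Sum>i\<in>I. \<psi>' i) = (\<Sum>i\<in>I. \<psi> i)"
    unfolding \<psi>'_def using I(1) j k by (simp add: sum.distrib m_def field_simps)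
  have cos': "cos (\<psi>' i) = cos (\<psi> i) + (if i = k then cos m - cos (\<psi> k) else 0)
      + (if i = j then cos m - cos (\<psi> j) else 0)" for i
    unfolding \<psi>'_def using j by auto
  have sumcos': "(\<Sum>i\<in>I. cos (\<psi>' i)) = (\<Sum>i\<in>I. cos (\<psi> i)) + 2 * cos m - cos (\<psi> k) - cos (\<psi> j)"
    unfolding cos' using I(1) j k by (simp add: sum.distrib)
  have m2: "m \<le> pi/2" "0 \<le> m" using jk S nn j k by (auto simp: m_def)
  have "cos (\<psi> k) + cos (\<psi> j) \<le> 2 * cos m"
  proof -
    have "cos (\<psi> k) + cos (\<psi> j) = 2 * cos m * cos ((\<psi> k - \<psi> j) / 2)"
      by (simp add: cos_plus_cos m_def)
    moreover have "cos m \<ge> 0" using m2 by (intro cos_ge_zero) auto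
    ultimately show ?thesis using cos_le_one[of "(\<psi> k - \<psi> j) / 2"]
      by (simp add: mult_left_le)
  qed
  moreover have "(\<Sum>i\<in>I. cos (\<psi>' i)) \<le> card I * cos ((\<Sum>i\<in>I. \<psi>' i) / card I)"
  proof (rule jensen_cos[OF I(1)])
    show "I \<noteq> {}" using k by auto
    fix i assume i: "i \<in> I"
    show "0 \<le> \<psi>' i \<and> \<psi>' i \<le> pi / 2"
    proof (cases "i = k \<or> i = j")
      case True
      then show ?thesis using m2 j by (auto simp: \<psi>'_def)
    next
      case False
      have "\<psi> i + \<psi> k \<le> (\<Sum>i\<in>I. \<psi> i)" by (rule pair_le_sum) (use I i k nn False in auto)
      then show ?thesis using False nn[OF i] S k by (auto simp: \<psi>'_def)
    qed
  qed
  ultimately show ?thesis using sumcos' unfolding sum' by linarith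
qed

lemma cos_sum_bound:
  fixes \<phi> :: "nat \<Rightarrow> real"
  assumes I: "finite I" "card I \<ge> 2" and b: "\<And>i. i \<in> I \<Longrightarrow> 0 \<le> \<phi> i \<and> \<phi> i \<le> pi"
    and g: "0 \<le> g" "g \<le> pi" "g \<le> (\<Sum>i\<in>I. \<phi> i)"
  shows "(\<Sum>i\<in>I. cos (\<phi> i)) \<le> card I * cos (g / card I)"
proof -
  define S where "S = (\<Sum>i\<in>I. \<phi> i)"
  show ?thesis
  proof (cases "S = 0")
    case True
    then have "\<forall>i\<in>I. \<phi> i = 0" using sum_nonneg_eq_0_iff[OF I(1)] b unfolding S_def by blast
    moreover have "g = 0" using g True S_def by linarith
    ultimately show ?thesis by simp
  next
    case False
    have Spos: "S > 0" using False sum_nonneg[of I \<phi>] b unfolding S_def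
      by (metis less_eq_real_def)
    define r where "r = g / S"
    have r: "0 \<le> r" "r \<le> 1" using g Spos by (auto simp: r_def S_def)
    define \<psi> where "\<psi> i = \<phi> i * r" for i
    have "(\<Sum>i\<in>I. \<psi> i) = S * r" by (simp add: \<psi>_def S_def sum_distrib_right)
    then have sum\<psi>: "(\<Sum>i\<in>I. \<psi> i) = g" using Spos by (simp add: r_def)
    have "(\<Sum>i\<in>I. cos (\<phi> i)) \<le> (\<Sum>i\<in>I. cos (\<psi> i))"
    proof (rule sum_mono)
      fix i assume "i \<in> I"
      then have "0 \<le> \<psi> i" "\<psi> i \<le> \<phi> i" "\<phi> i \<le> pi" using b r
        by (auto simp: \<psi>_def mult_left_le)
      then show "cos (\<phi> i) \<le> cos (\<psi> i)" by (intro cos_monotone_0_pi_le)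
    qed
    also have "\<dots> \<le> card I * cos ((\<Sum>i\<in>I. \<psi> i) / card I)"
      by (rule smooth_cos[OF I]) (use b r sum\<psi> g in \<open>auto simp: \<psi>_def\<close>)
    finally show ?thesis using sum\<psi> by simp
  qed
qed




lemma lprod_0: "lprod f 0 = mat 1" by (simp add: lprod_def)
lemma lprod_1: "lprod f (Suc 0) = mat 1" by (simp add: lprod_def)
lemma lprod_Suc: "1 \<le> k \<Longrightarrow> lprod f (Suc k) = lprod f k ** f k"
  by (simp add: lprod_def)

lemma lprod_SO3: "(\<And>i. 1 \<le> i \<Longrightarrow> i < k \<Longrightarrow> f i \<in> SO3) \<Longrightarrow> lprod f k \<in> SO3"
proof (induction k)
  case 0 then show ?case by (simp add: lprod_0 SO3_id)
next
  case (Suc k)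
  show ?case
  proof (cases "k = 0")
    case True then show ?thesis by (simp add: lprod_1 SO3_id)
  next
    case False
    then show ?thesis using Suc by (simp add: lprod_Suc SO3_mult)
  qed
qed

lemma hang_id: "hang (mat 1) = 0"
  by (simp add: hang_def trace_id3)

lemma hang_SO3: assumes "Q \<in> SO3"
  shows "0 \<le> hang Q" "hang Q \<le> pi/2" "trace Q = 1 + 2 * cos (2 * hang Q)"
proof -
  obtain a u where u: "norm u = 1" "Q = rod a u" using SO3_rod[OF assms] by blast
  define x where "x = a / 2"
  have Q: "Q = rod (2 * x) u" using u by (simp add: x_def)
  have h: "hang Q = arccos \<bar>cos x\<bar>" using Q hang_rod[OF u(1)] by simp
  show "0 \<le> hang Q" "hang Q \<le> pi/2" unfolding h
    using arccos_le_pi2[of "\<bar>cos x\<bar>"] arccos_lbound[of "\<bar>cos x\<bar>"] by auto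
  have "cos (2 * hang Q) = 2 * (cos x)^2 - 1" unfolding h cos_double_cos by simp
  then show "trace Q = 1 + 2 * cos (2 * hang Q)"
    unfolding Q trace_rod[OF u(1)] cos_double_cos by simp
qed

lemma hang_lprod: "(\<And>i. 1 \<le> i \<Longrightarrow> i < k \<Longrightarrow> f i \<in> SO3) \<Longrightarrow>
   hang (lprod f k) \<le> (\<Sum>i\<in>{1..<k}. hang (f i))"
proof (induction k)
  case 0 then show ?case by (simp add: lprod_0 hang_id)
next
  case (Suc k)
  show ?case
  proof (cases "k = 0")
    case True then show ?thesis by (simp add: lprod_1 hang_id)
  next
    case False
    have e: "lprod f (Suc k) = lprod f k ** f k" using False by (simp add: lprod_Suc)
    have s1: "lprod f k \<in> SO3" using Suc.prems by (intro lprod_SO3) auto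
    have s2: "f k \<in> SO3" using Suc.prems False by auto
    have "hang (lprod f (Suc k)) \<le> hang (lprod f k) + hang (f k)"
      unfolding e by (rule hang_mult[OF s1 s2])
    also have "\<dots> \<le> (\<Sum>i\<in>{1..<k}. hang (f i)) + hang (f k)" using Suc by auto
    also have "\<dots> = (\<Sum>i\<in>{1..<Suc k}. hang (f i))" using False by simp
    finally show ?thesis .
  qed
qed

lemma hang_conj: assumes "R \<in> SO3" shows "hang (transpose R ** E ** R) = hang E"
proof -
  have "trace (transpose R ** E ** R) = trace (R ** (transpose R ** E))"
    by (rule trace_mul_sym)
  also have "\<dots> = trace E" using SO3_tr[OF assms] by (simp add: matrix_mul_assoc)
  finally show ?thesis by (simp add: hang_def)
qed

lemma hang_rod_gen: assumes "norm u = 1" "- pi \<le> g" "g \<le> pi"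
  shows "hang (rod g u) = \<bar>g\<bar> / 2"
proof -
  have "hang (rod g u) = arccos \<bar>cos (g/2)\<bar>" using hang_rod[OF assms(1), of "g/2"] by simp
  also have "\<bar>cos (g/2)\<bar> = cos (\<bar>g\<bar>/2)"
  proof -
    have "cos (g/2) \<ge> 0" using assms by (intro cos_ge_zero) auto
    moreover have "cos (\<bar>g\<bar>/2) = cos (g/2)" by (cases "g \<ge> 0") auto
    ultimately show ?thesis by simp
  qed
  also have "arccos (cos (\<bar>g\<bar>/2)) = \<bar>g\<bar>/2" using assms by (intro arccos_cos) auto
  finally show ?thesis .
qed




definition nx :: "nat \<Rightarrow> nat \<Rightarrow> nat" where "nx n i = (if i = n then 1 else Suc i)"
definition pv :: "nat \<Rightarrow> nat \<Rightarrow> nat" where "pv n i = (if i = 1 then n else i - 1)"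

lemma nx_pv_facts:
  assumes "n \<ge> 3" "i \<in> {1..n}"
  shows "nx n i \<in> {1..n}" "pv n i \<in> {1..n}" "nx n i \<noteq> i" "pv n i \<noteq> i" "nx n i \<noteq> pv n i"
    "nx n (pv n i) = i" "pv n (nx n i) = i"
  using assms by (auto simp: nx_def pv_def)

lemma block_zero:
  assumes "n \<ge> 3" "i \<in> {1..n}" "j \<noteq> i" "j \<noteq> nx n i" "j \<noteq> pv n i"
  shows "Rtil_block n meas i j = 0"
proof -
  have a: "j \<noteq> (if i = n then 1 else Suc i)" "j \<noteq> (if i = 1 then n else i - 1)"
    using assms(4,5) unfolding nx_def pv_def by auto
  have "\<not> cyc_adj n i j"
  proof
    assume c: "cyc_adj n i j"
    show False
    proof (cases "i = n")
      case True
      then have "i \<noteq> 1" using assms(1) by auto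
      then show False using c a True assms(1) unfolding cyc_adj_def by auto
    next
      case False
      note F = False
      show False
      proof (cases "i = 1")
        case True
        then show False using c a F unfolding cyc_adj_def by auto
      next
        case False
        then show False using c a F unfolding cyc_adj_def by auto
      qed
    qed
  qed
  then show ?thesis using assms(3) by (simp add: Rtil_block_def)
qed

lemma block_nx:
  assumes "n \<ge> 3" "i \<in> {1..n}"
  shows "Rtil_block n meas i (nx n i) = meas i"
  using assms by (auto simp: Rtil_block_def cyc_adj_def nx_def edge_meas_def)

lemma block_pv:
  assumes "n \<ge> 3" "i \<in> {1..n}"
  shows "Rtil_block n meas i (pv n i) = transpose (meas (pv n i))"
  using assms by (auto simp: Rtil_block_def cyc_adj_def pv_def edge_meas_def)

lemma trace_zero3: "trace (0::real^3^3) = 0" by (simp add: trace_def)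

lemma block_diag: "Rtil_block n meas i i = mat 1"
  by (simp add: Rtil_block_def)

lemma trace_flip: "trace (transpose A ** transpose M ** B) = trace (transpose B ** M ** (A::real^3^3))"
proof -
  have "transpose (transpose B ** M ** A) = transpose A ** transpose M ** B"
    by (simp add: matrix_transpose_mul matrix_mul_assoc)
  then show ?thesis by (metis trace_transp)
qed

lemma cost_decomp:
  assumes n: "n \<ge> 3" and R: "\<forall>i\<in>{1..n}. R i \<in> SO3"
  shows "cost n meas R = - (3 * n + 2 * (\<Sum>i\<in>{1..n}. trace (transpose (R i) ** meas i ** R (nx n i))))"
proof -
  define G where "G i = trace (transpose (R i) ** meas i ** R (nx n i))" for i
  define F where "F i j = trace (transpose (R i) ** Rtil_block n meas i j ** R j)" for i j
  have inner: "(\<Sum>j\<in>{1..n}. F i j) = 3 + G i + G (pv n i)" if i: "i \<in> {1..n}" for i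
  proof -
    note f = nx_pv_facts[OF n i]
    have "(\<Sum>j\<in>{1..n}. F i j) = (\<Sum>j\<in>{i, nx n i, pv n i}. F i j)"
      by (rule sum.mono_neutral_right) (use f i n in \<open>auto simp: F_def block_zero trace_zero3\<close>)
    also have "\<dots> = F i i + F i (nx n i) + F i (pv n i)"
      using f by simp
    also have "F i i = 3" using R i by (simp add: F_def block_diag SO3_tl trace_id3)
    also have "F i (nx n i) = G i" by (simp add: F_def G_def block_nx[OF n i])
    also have "F i (pv n i) = G (pv n i)"
      by (simp add: F_def G_def block_pv[OF n i] trace_flip f(6))
    finally show ?thesis .
  qed
  have reidx: "(\<Sum>i\<in>{1..n}. G (pv n i)) = (\<Sum>i\<in>{1..n}. G i)"
    by (rule sum.reindex_bij_witness[where i = "nx n" and j = "pv n"]) (use nx_pv_facts[OF n] in auto)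
  have "cost n meas R = - (\<Sum>i\<in>{1..n}. \<Sum>j\<in>{1..n}. F i j)"
    by (simp add: cost_def F_def)
  also have "(\<Sum>i\<in>{1..n}. \<Sum>j\<in>{1..n}. F i j) = (\<Sum>i\<in>{1..n}. 3 + G i + G (pv n i))"
  proof (rule sum.cong[OF refl])
    fix i assume "i \<in> {1..n}"
    then show "(\<Sum>j\<in>{1..n}. F i j) = 3 + G i + G (pv n i)" by (rule inner)
  qed
  also have "\<dots> = 3 * n + (\<Sum>i\<in>{1..n}. G i) + (\<Sum>i\<in>{1..n}. G (pv n i))"
    by (simp add: sum.distrib)
  finally have "cost n meas R = - (3 * n + (\<Sum>i\<in>{1..n}. G i) + (\<Sum>i\<in>{1..n}. G (pv n i)))" .
  then have "cost n meas R = - (3 * n + 2 * (\<Sum>i\<in>{1..n}. G i))" unfolding reidx by simp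
  then show ?thesis by (simp add: G_def)
qed

lemma cancel_SO3: "R \<in> SO3 \<Longrightarrow> X ** R ** transpose R = X"
  by (metis SO3_tr matrix_mul_assoc matrix_mul_rid)

lemma tele:
  fixes meas :: "nat \<Rightarrow> real^3^3"
  assumes n: "n \<ge> 3" and R: "\<forall>i\<in>{1..n}. R i \<in> SO3"
  defines "Q \<equiv> (\<lambda>i. transpose (R i) ** meas i ** R (nx n i))"
  shows "1 \<le> k \<Longrightarrow> k < n \<Longrightarrow> lprod Q (Suc k) = transpose (R 1) ** lprod meas (Suc k) ** R (Suc k)"
proof (induction k)
  case 0 then show ?case by simp
next
  case (Suc k)
  show ?case
  proof (cases "k = 0")
    case True
    then have "lprod Q (Suc (Suc k)) = Q 1" "lprod meas (Suc (Suc k)) = meas 1"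
      by (simp_all add: lprod_Suc lprod_1)
    moreover have "nx n 1 = 2" using n by (simp add: nx_def)
    ultimately show ?thesis using True by (simp add: Q_def matrix_mul_assoc numeral_2_eq_2)
  next
    case False
    have RS: "R (Suc k) \<in> SO3" using R Suc.prems by auto
    have nxk: "nx n (Suc k) = Suc (Suc k)" using Suc.prems by (simp add: nx_def)
    have "lprod Q (Suc (Suc k)) = lprod Q (Suc k) ** Q (Suc k)" by (simp add: lprod_Suc)
    also have "\<dots> = transpose (R 1) ** lprod meas (Suc k) ** R (Suc k) ** Q (Suc k)"
      using Suc False by simp
    also have "\<dots> = transpose (R 1) ** (lprod meas (Suc k) ** meas (Suc k)) ** R (Suc (Suc k))"
      by (simp add: Q_def nxk matrix_mul_assoc cancel_SO3[OF RS])
    also have "lprod meas (Suc k) ** meas (Suc k) = lprod meas (Suc (Suc k))"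
      by (simp add: lprod_Suc)
    finally show ?thesis .
  qed
qed

lemma tele_full:
  fixes meas :: "nat \<Rightarrow> real^3^3"
  assumes n: "n \<ge> 3" and R: "\<forall>i\<in>{1..n}. R i \<in> SO3"
  defines "Q \<equiv> (\<lambda>i. transpose (R i) ** meas i ** R (nx n i))"
  shows "lprod Q (Suc n) = transpose (R 1) ** cycle_err n meas ** R 1"
proof -
  have t: "lprod Q n = transpose (R 1) ** lprod meas n ** R n"
    using tele[OF n R, of "n - 1" meas] n unfolding Q_def by simp
  have Rn: "R n \<in> SO3" using R n by auto
  have "lprod Q (Suc n) = lprod Q n ** Q n" using n by (simp add: lprod_Suc)
  also have "\<dots> = transpose (R 1) ** (lprod meas n ** meas n) ** R 1"
    unfolding t by (simp add: Q_def nx_def matrix_mul_assoc cancel_SO3[OF Rn])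
  also have "lprod meas n ** meas n = cycle_err n meas"
    using n by (simp add: cycle_err_def lprod_Suc)
  finally show ?thesis .
qed

lemma trace_bound:
  assumes n: "n \<ge> 3" and R: "\<forall>i\<in>{1..n}. R i \<in> SO3" and M: "\<forall>i\<in>{1..n}. meas i \<in> SO3"
    and E: "cycle_err n meas = rod \<gamma> nh" "norm nh = 1" "- pi \<le> \<gamma>" "\<gamma> \<le> pi"
  shows "(\<Sum>i\<in>{1..n}. trace (transpose (R i) ** meas i ** R (nx n i))) \<le> n * (1 + 2 * cos (\<gamma> / n))"
proof -
  define Q where "Q = (\<lambda>i. transpose (R i) ** meas i ** R (nx n i))"
  have QS: "Q i \<in> SO3" if "i \<in> {1..n}" for i
    using that R M nx_pv_facts(1)[OF n that] by (auto simp: Q_def intro!: SO3_mult SO3_transpose)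
  have "hang (lprod Q (Suc n)) \<le> (\<Sum>i\<in>{1..<Suc n}. hang (Q i))"
    by (rule hang_lprod) (use QS in auto)
  moreover have "hang (lprod Q (Suc n)) = \<bar>\<gamma>\<bar> / 2"
  proof -
    have R1: "R 1 \<in> SO3" using R n by auto
    have "hang (lprod Q (Suc n)) = hang (transpose (R 1) ** rod \<gamma> nh ** R 1)"
      unfolding Q_def tele_full[OF n R] E(1) ..
    also have "\<dots> = hang (rod \<gamma> nh)" by (rule hang_conj[OF R1])
    also have "\<dots> = \<bar>\<gamma>\<bar> / 2" using E by (simp add: hang_rod_gen)
    finally show ?thesis .
  qed
  ultimately have hs: "\<bar>\<gamma>\<bar> \<le> (\<Sum>i\<in>{1..n}. 2 * hang (Q i))"
    by (simp add: atLeastLessThanSuc_atLeastAtMost sum_distrib_left[symmetric])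
  have cb: "(\<Sum>i\<in>{1..n}. cos (2 * hang (Q i))) \<le> card {1..n} * cos (\<bar>\<gamma>\<bar> / card {1..n})"
  proof (rule cos_sum_bound)
    fix i assume "i \<in> {1..n}"
    from hang_SO3(1,2)[OF QS[OF this]]
    show "0 \<le> 2 * hang (Q i) \<and> 2 * hang (Q i) \<le> pi" by linarith
  qed (use n hs E in auto)
  have "(\<Sum>i\<in>{1..n}. trace (Q i)) = (\<Sum>i\<in>{1..n}. 1 + 2 * cos (2 * hang (Q i)))"
    by (rule sum.cong) (auto simp: hang_SO3(3)[OF QS])
  also have "\<dots> = n + 2 * (\<Sum>i\<in>{1..n}. cos (2 * hang (Q i)))"
    by (simp add: sum.distrib sum_distrib_left)
  also have "\<dots> \<le> n + 2 * (n * cos (\<gamma> / n))"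
  proof -
    have "cos (\<bar>\<gamma>\<bar> / n) = cos (\<gamma> / n)"
      using cos_abs_real[of "\<gamma> / n"] by (simp add: abs_divide)
    then show ?thesis using cb by simp
  qed
  finally show ?thesis unfolding Q_def by (simp add: algebra_simps)
qed




lemma matpow_rod: "norm u = 1 \<Longrightarrow> matpow (rod a u) k = rod (real k * a) u"
  by (induction k) (simp_all add: rod_0 rod_mult algebra_simps)

theorem theorem1:
  fixes n :: nat and meas :: "nat \<Rightarrow> real^3^3" and u :: "real^3"
    and \<theta> :: "nat \<Rightarrow> real" and nh :: "real^3" and \<gamma> :: real
  assumes n3: "n \<ge> 3"
    and meas_SO3: "\<forall>i\<in>{1..n}. meas i \<in> SO3"
    and common_axis: "norm u = 1" "\<forall>i\<in>{1..n}. meas i = mat_exp (\<theta> i *\<^sub>R skew u)"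
    and E_rep: "norm nh = 1" "-pi \<le> \<gamma>" "\<gamma> \<le> pi"
      "cycle_err n meas = mat_exp (\<gamma> *\<^sub>R skew nh)"
  shows "let E0 = mat_exp ((\<gamma> / real n) *\<^sub>R skew nh);
             Rstar = (\<lambda>i. if i = 1 then mat 1
                           else transpose (lprod meas i) ** matpow E0 (i - 1))
         in (\<forall>i\<in>{1..n}. Rstar i \<in> SO3) \<and>
            (\<forall>R. (\<forall>i\<in>{1..n}. R i \<in> SO3) \<longrightarrow> cost n meas Rstar \<le> cost n meas R)"
proof -
  define \<alpha> where "\<alpha> = \<gamma> / real n"
  define E0 where "E0 = mat_exp ((\<gamma> / real n) *\<^sub>R skew nh)"
  define Rs where "Rs = (\<lambda>i. if i = 1 then mat 1
                           else transpose (lprod meas i) ** matpow E0 (i - 1))"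
  have nh: "norm nh = 1" using E_rep by simp
  have E0: "E0 = rod \<alpha> nh" unfolding E0_def \<alpha>_def by (rule mat_exp_skew[OF nh])
  have E: "cycle_err n meas = rod \<gamma> nh" using E_rep(4) mat_exp_skew[OF nh] by simp
  have Lc: "lprod meas n ** meas n = rod \<gamma> nh"
    using E n3 by (simp add: cycle_err_def lprod_Suc)
  have LS: "lprod meas i \<in> SO3" if "i \<le> Suc n" for i
    by (rule lprod_SO3) (use that meas_SO3 in auto)
  have Rs_eq: "Rs i = transpose (lprod meas i) ** rod (real (i - 1) * \<alpha>) nh" if "1 \<le> i" for i
    using that by (cases "i = 1") (simp_all add: Rs_def E0 matpow_rod[OF nh] lprod_1 rod_0)
  have RsS: "\<forall>i\<in>{1..n}. Rs i \<in> SO3"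
    using Rs_eq LS by (auto intro!: SO3_mult SO3_transpose rod_SO3[OF nh])
  have Qs: "transpose (Rs i) ** meas i ** Rs (nx n i) = rod \<alpha> nh" if i: "i \<in> {1..n}" for i
  proof (cases "i = n")
    case True
    have "transpose (Rs i) ** meas i ** Rs (nx n i)
        = rod (- (real (n - 1) * \<alpha>)) nh ** (lprod meas n ** meas n)"
      using True n3 by (simp add: nx_def Rs_eq lprod_1 rod_0 matrix_transpose_mul rod_transpose matrix_mul_assoc)
    also have "\<dots> = rod (\<gamma> - real (n - 1) * \<alpha>) nh" unfolding Lc rod_mult[OF nh] by simp
    also have "\<gamma> - real (n - 1) * \<alpha> = \<alpha>" using n3 by (simp add: \<alpha>_def of_nat_diff field_simps)
    finally show ?thesis .
  next
    case False
    have i1: "1 \<le> i" "i < n" using i False by auto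
    have "transpose (Rs i) ** meas i ** Rs (nx n i)
        = rod (- (real (i - 1) * \<alpha>)) nh ** (lprod meas i ** meas i) ** transpose (lprod meas (Suc i))
          ** rod (real i * \<alpha>) nh"
      using i1 by (simp add: nx_def Rs_eq matrix_transpose_mul rod_transpose matrix_mul_assoc)
    also have "lprod meas i ** meas i = lprod meas (Suc i)" using i1 by (simp add: lprod_Suc)
    also have "rod (- (real (i - 1) * \<alpha>)) nh ** lprod meas (Suc i) ** transpose (lprod meas (Suc i))
        = rod (- (real (i - 1) * \<alpha>)) nh"
      by (rule cancel_SO3[OF LS]) (use i1 in auto)
    also have "rod (- (real (i - 1) * \<alpha>)) nh ** rod (real i * \<alpha>) nh = rod \<alpha> nh"
      unfolding rod_mult[OF nh] using i1 by (simp add: of_nat_diff algebra_simps)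
    finally show ?thesis .
  qed
  have costRs: "cost n meas Rs = - (3 * n + 2 * (n * (1 + 2 * cos \<alpha>)))"
  proof -
    have "(\<Sum>i\<in>{1..n}. trace (transpose (Rs i) ** meas i ** Rs (nx n i))) = (\<Sum>i\<in>{1..n}. 1 + 2 * cos \<alpha>)"
      by (rule sum.cong[OF refl]) (simp add: Qs trace_rod[OF nh] del: atLeastAtMost_iff)
    then show ?thesis using cost_decomp[OF n3 RsS] by simp
  qed
  have main: "cost n meas Rs \<le> cost n meas R" if R: "\<forall>i\<in>{1..n}. R i \<in> SO3" for R
  proof -
    have "(\<Sum>i\<in>{1..n}. trace (transpose (R i) ** meas i ** R (nx n i))) \<le> n * (1 + 2 * cos \<alpha>)"
      unfolding \<alpha>_def by (rule trace_bound[OF n3 R meas_SO3 E nh E_rep(2,3)])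
    then show ?thesis unfolding costRs cost_decomp[OF n3 R] by simp
  qed
  have "(\<forall>i\<in>{1..n}. Rs i \<in> SO3) \<and> (\<forall>R. (\<forall>i\<in>{1..n}. R i \<in> SO3) \<longrightarrow> cost n meas Rs \<le> cost n meas R)"
    using RsS main by blast
  then show ?thesis unfolding Let_def Rs_def E0_def .
qed


end
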